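(* In the setting described in the context, with initialization parameters $R=v=\frac{1}{\sqrt{2k}}$ (i.e. second layer $\mathbf{v}=(v,\dots,v,-v,\dots,-v)$ with $v=1/\sqrt{2k}$ and all rows of $W_0$ of norm at most $1/\sqrt{2k}$), SGD converges to a global minimum of $L_S$ after performing at most $$M_k=\frac{\|\mathbf{w}^*\|^2}{\alpha^2}+O\!\left(\frac{\|\mathbf{w}^*\|^2}{\min\{\eta,\sqrt{\eta}\}}\right)$$ non-zero updates, where the implied constant depends only on $\alpha$ (in particular not on $k$).
   Context: Data: $S=\{(\mathbf{x}_1,y_1),\dots,(\mathbf{x}_n,y_n)\}$ with $\|\mathbf{x}_i\|\le1$, $y_i\in\{\pm1\}$, and $\mathbf{w}^*\in\mathbb{R}^d$ with $y_i\langle\mathbf{w}^*,\mathbf{x}_i\rangle\ge1$ for all $i$ (so $\|\mathbf{w}^*\|\ge1$). Network $N_W(\mathbf{x})=\mathbf{v}^\top\sigma(W\mathbf{x})$, $W\in\mathbb{R}^{2k\times d}$, $\sigma(z)=\max\{\alpha z,z\}$ with $0<\alpha<1$, fixed $\mathbf{v}=(v,\dots,v,-v,\dots,-v)\in\mathbb{R}^{2k}$. Loss $L_S(W)=\frac1n\sum_i\max\{1-y_iN_W(\mathbf{x}_i),0\}$. SGD: batch size 1, constant learning rate $\eta>0$, only $W$ is updated; at each iteration an example $(\mathbf{x}_t,y_t)\in S$ is picked; if $y_tN_{W_{t-1}}(\mathbf{x}_t)\ge1$ nothing changes, otherwise the $i$-th row ($i\le k$) gets $+\eta v p y_t\mathbf{x}_t$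 and the $(k+i)$-th row gets $-\eta v q y_t\mathbf{x}_t$, where $p$ (resp. $q$) equals $1$ if the row's inner product with $\mathbf{x}_t$ is $\ge0$ and $\alpha$ otherwise. Such an update is called non-zero. *)

theory Defs
  imports Complex_Main
begin

text \<open>Vectors in R^d are represented as functions nat => real; only coordinates < d matter.
  A weight matrix W in R^(2k x d) is represented by its rows W j, j < 2k
  (rows j < k carry output weight +v, rows k <= j < 2k carry output weight -v).\<close>

definition ip :: "nat \<Rightarrow> (nat \<Rightarrow> real) \<Rightarrow> (nat \<Rightarrow> real) \<Rightarrow> real" where
  "ip d a b = (\<Sum>i<d. a i * b i)"

definition vnorm :: "nat \<Rightarrow> (nat \<Rightarrow> real) \<Rightarrow> real" where
  "vnorm d a = sqrt (ip d a a)"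

definition leaky :: "real \<Rightarrow> real \<Rightarrow> real" where
  "leaky \<alpha> z = max (\<alpha> * z) z"

definition net :: "real \<Rightarrow> nat \<Rightarrow> nat \<Rightarrow> real \<Rightarrow> (nat \<Rightarrow> nat \<Rightarrow> real) \<Rightarrow> (nat \<Rightarrow> real) \<Rightarrow> real" where
  "net \<alpha> d k v W x =
     (\<Sum>i<k. v * leaky \<alpha> (ip d (W i) x)) - (\<Sum>i<k. v * leaky \<alpha> (ip d (W (k + i)) x))"

definition loss :: "real \<Rightarrow> nat \<Rightarrow> nat \<Rightarrow> real \<Rightarrow> ((nat \<Rightarrow> real) \<times> real) list \<Rightarrow> (nat \<Rightarrow> nat \<Rightarrow> real) \<Rightarrow> real" where
  "loss \<alpha> d k v S W =
     (\<Sum>(x, y) \<leftarrow> S. max (1 - y * net \<alpha> d k v W x) 0) / real (length S)"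

definition sgd_step :: "real \<Rightarrow> nat \<Rightarrow> nat \<Rightarrow> real \<Rightarrow> real \<Rightarrow> (nat \<Rightarrow> nat \<Rightarrow> real) \<Rightarrow> (nat \<Rightarrow> real) \<times> real \<Rightarrow> (nat \<Rightarrow> nat \<Rightarrow> real)" where
  "sgd_step \<alpha> d k v \<eta> W xy =
     (let x = fst xy; y = snd xy in
      if y * net \<alpha> d k v W x \<ge> 1 then W
      else (\<lambda>j. if j < k then
                   (let p = (if ip d (W j) x \<ge> 0 then 1 else \<alpha>) in
                    (\<lambda>i. W j i + \<eta> * v * p * y * x i))
                 else if j < 2 * k then
                   (let q = (if ip d (W j) x \<ge> 0 then 1 else \<alpha>) in
                    (\<lambda>i. W j i - \<eta> * v * q * y * x i))
                 else W j))"

primrec sgd :: "real \<Rightarrow> nat \<Rightarrow> nat \<Rightarrow> real \<Rightarrow> real \<Rightarrow> ((nat \<Rightarrow> real) \<times> real) list \<Rightarrow> (nat \<Rightarrow> nat)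
    \<Rightarrow> (nat \<Rightarrow> nat \<Rightarrow> real) \<Rightarrow> nat \<Rightarrow> (nat \<Rightarrow> nat \<Rightarrow> real)" where
  "sgd \<alpha> d k v \<eta> S idx W0 0 = W0"
| "sgd \<alpha> d k v \<eta> S idx W0 (Suc t) = sgd_step \<alpha> d k v \<eta> (sgd \<alpha> d k v \<eta> S idx W0 t) (S ! idx t)"

definition nonzero_update :: "real \<Rightarrow> nat \<Rightarrow> nat \<Rightarrow> real \<Rightarrow> real \<Rightarrow> ((nat \<Rightarrow> real) \<times> real) list \<Rightarrow> (nat \<Rightarrow> nat)
    \<Rightarrow> (nat \<Rightarrow> nat \<Rightarrow> real) \<Rightarrow> nat \<Rightarrow> bool" where
  "nonzero_update \<alpha> d k v \<eta> S idx W0 t =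
     (snd (S ! idx t) * net \<alpha> d k v (sgd \<alpha> d k v \<eta> S idx W0 t) (fst (S ! idx t)) < 1)"

end

theory Submission
  imports Defs "HOL-Analysis.Convex"
begin

lemma ip_nonneg: "0 \<le> ip d a a"
  unfolding ip_def by (simp add: sum_nonneg)

lemma ip_sym: "ip d a b = ip d b a"
  unfolding ip_def by (simp add: mult.commute)

lemma cs: "\<bar>ip d a b\<bar> \<le> vnorm d a * vnorm d b"
proof -
  have "(ip d a b)\<^sup>2 \<le> ip d a a * ip d b b"
    using Cauchy_Schwarz_ineq_sum[of a b "{..<d}"] unfolding ip_def by (simp add: power2_eq_square)
  hence "sqrt ((ip d a b)\<^sup>2) \<le> sqrt (ip d a a * ip d b b)" by (rule real_sqrt_le_mono)
  thus ?thesis unfolding vnorm_def by (simp add: real_sqrt_mult)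
qed

lemma cs_sum:
  fixes f g :: "nat \<Rightarrow> real"
  shows "(\<Sum>i\<in>I. f i * g i) \<le> sqrt (\<Sum>i\<in>I. (f i)\<^sup>2) * sqrt (\<Sum>i\<in>I. (g i)\<^sup>2)"
proof -
  have "(\<Sum>i\<in>I. f i * g i)\<^sup>2 \<le> (\<Sum>i\<in>I. (f i)\<^sup>2) * (\<Sum>i\<in>I. (g i)\<^sup>2)"
    by (rule Cauchy_Schwarz_ineq_sum)
  hence "sqrt ((\<Sum>i\<in>I. f i * g i)\<^sup>2) \<le> sqrt ((\<Sum>i\<in>I. (f i)\<^sup>2) * (\<Sum>i\<in>I. (g i)\<^sup>2))" by (rule real_sqrt_le_mono)
  thus ?thesis by (simp add: real_sqrt_mult)
qed

lemma ip_lin: "ip d (\<lambda>i. a i + c * b i) e = ip d a e + c * ip d b e"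
  unfolding ip_def by (simp add: algebra_simps sum.distrib sum_distrib_left)

lemma ip_sq: "ip d (\<lambda>i. a i + c * b i) (\<lambda>i. a i + c * b i) = ip d a a + 2 * c * ip d a b + c\<^sup>2 * ip d b b"
  unfolding ip_def by (simp add: algebra_simps power2_eq_square sum.distrib sum_distrib_left)

lemma sum2k: "(\<Sum>j<2*k. f j) = (\<Sum>j<k. f j) + (\<Sum>j<k. f (k + j)) " for f :: "nat \<Rightarrow> real"
proof -
  have "(\<Sum>j<2*k. f j) = (\<Sum>j<k+k. f j)" by (simp add: mult_2)
  also have "\<dots> = (\<Sum>j<k. f j) + (\<Sum>j\<in>{k..<k+k}. f j)"
    by (simp add: lessThan_atLeast0 sum.atLeastLessThan_concat)
  also have "(\<Sum>j\<in>{k..<k+k}. f j) = (\<Sum>j<k. f (k + j))"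
    using sum.shift_bounds_nat_ivl[of f 0 k k] by (simp add: lessThan_atLeast0 add.commute)
  finally show ?thesis .
qed

definition sg :: "nat \<Rightarrow> nat \<Rightarrow> real" where "sg k j = (if j < k then 1 else -1)"
definition pp :: "real \<Rightarrow> nat \<Rightarrow> (nat \<Rightarrow> real) \<Rightarrow> (nat \<Rightarrow> real) \<Rightarrow> real" where
  "pp \<alpha> d w x = (if ip d w x \<ge> 0 then 1 else \<alpha>)"

lemma net_alt: "net \<alpha> d k v W x = (\<Sum>j<2*k. sg k j * v * leaky \<alpha> (ip d (W j) x))"
  unfolding net_def sum2k sg_def by (simp add: sum_negf)

lemma leaky_z: "\<alpha> \<le> 1 \<Longrightarrow> (if z \<ge> 0 then 1 else \<alpha>) * z = max (\<alpha> * z) (z::real)"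
proof (cases "z \<ge> 0")
  case True
  assume "\<alpha> \<le> 1"
  hence "\<alpha> * z \<le> 1 * z" using True by (intro mult_right_mono) auto
  thus ?thesis using True by simp
next
  case False
  assume "\<alpha> \<le> 1"
  hence "1 * z \<le> \<alpha> * z" using False by (intro mult_right_mono_neg) auto
  thus ?thesis using False by simp
qed

lemma leaky_pp: "\<alpha> \<le> 1 \<Longrightarrow> pp \<alpha> d w x * ip d w x = leaky \<alpha> (ip d w x)"
  unfolding pp_def leaky_def by (rule leaky_z)

lemma step_nz: "\<not> (y * net \<alpha> d k v W x \<ge> 1) \<Longrightarrow> j < 2*k \<Longrightarrow>
   sgd_step \<alpha> d k v \<eta> W (x, y) j = (\<lambda>i. W j i + (sg k j * \<eta> * v * pp \<alpha> d (W j) x * y) * x i)"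
  unfolding sgd_step_def sg_def pp_def Let_def by (auto simp: algebra_simps)

definition FF :: "nat \<Rightarrow> nat \<Rightarrow> (nat \<Rightarrow> nat \<Rightarrow> real) \<Rightarrow> (nat \<Rightarrow> real) \<Rightarrow> real" where
  "FF d k W ws = (\<Sum>j<2*k. sg k j * ip d (W j) ws)"
definition GG :: "nat \<Rightarrow> nat \<Rightarrow> (nat \<Rightarrow> nat \<Rightarrow> real) \<Rightarrow> real" where
  "GG d k W = (\<Sum>j<2*k. ip d (W j) (W j))"

lemma sg_sq: "sg k j * sg k j = 1" unfolding sg_def by auto

lemma pp_ge: "0 < \<alpha> \<Longrightarrow> \<alpha> < 1 \<Longrightarrow> \<alpha> \<le> pp \<alpha> d w x \<and> pp \<alpha> d w x \<le> 1"
  unfolding pp_def by auto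

lemma FF_step:
  assumes a: "0 < \<alpha>" "\<alpha> < 1" and eta: "\<eta> > 0" and k: "k \<ge> 1" and v: "v = 1 / sqrt (2 * real k)"
    and marg: "y * ip d ws x \<ge> 1"
    and nz: "\<not> (y * net \<alpha> d k v W x \<ge> 1)"
  shows "FF d k (sgd_step \<alpha> d k v \<eta> W (x, y)) ws \<ge> FF d k W ws + \<eta> * \<alpha> * sqrt (2 * real k)"
proof -
  let ?c = "\<lambda>j. sg k j * \<eta> * v * pp \<alpha> d (W j) x * y"
  have vpos: "v > 0" using v k by simp
  have "FF d k (sgd_step \<alpha> d k v \<eta> W (x, y)) ws = (\<Sum>j<2*k. sg k j * (ip d (W j) ws + ?c j * ip d x ws))"
    unfolding FF_def by (rule sum.cong) (simp_all add: step_nz[OF nz] ip_lin)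
  also have "\<dots> = FF d k W ws + (\<Sum>j<2*k. \<eta> * v * pp \<alpha> d (W j) x * (y * ip d ws x))"
    unfolding FF_def sum.distrib[symmetric]
    by (intro sum.cong refl) (simp add: sg_def ip_sym algebra_simps)
  also have "(\<Sum>j<2*k. \<eta> * v * pp \<alpha> d (W j) x * (y * ip d ws x)) \<ge> (\<Sum>j<2*k. \<eta> * v * \<alpha>)"
  proof (rule sum_mono)
    fix j
    have "\<eta> * v * \<alpha> \<le> \<eta> * v * pp \<alpha> d (W j) x"
      using pp_ge[OF a, of d "W j" x] eta vpos by simp
    also have "\<dots> \<le> \<eta> * v * pp \<alpha> d (W j) x * (y * ip d ws x)"
    proof -
      have "0 \<le> \<eta> * v * pp \<alpha> d (W j) x" using pp_ge[OF a, of d "W j" x] eta vpos a by simp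
      from mult_left_mono[OF marg this] show ?thesis by simp
    qed
    finally show "\<eta> * v * \<alpha> \<le> \<eta> * v * pp \<alpha> d (W j) x * (y * ip d ws x)" .
  qed
  moreover have "(\<Sum>j<2*k. \<eta> * v * \<alpha>) = \<eta> * \<alpha> * sqrt (2 * real k)"
  proof -
    have s: "sqrt (2 * real k) > 0" using k by simp
    have "(\<Sum>j<2*k. \<eta> * v * \<alpha>) = \<eta> * \<alpha> * ((2 * real k) / sqrt (2 * real k))"
      by (simp add: v)
    also have "(2 * real k) / sqrt (2 * real k) = sqrt (2 * real k)"
      by (rule real_div_sqrt) simp
    finally show ?thesis .
  qed
  ultimately show ?thesis by linarith
qed

lemma GG_step:
  assumes a: "0 < \<alpha>" "\<alpha> < 1" and eta: "\<eta> > 0" and k: "k \<ge> 1" and v: "v = 1 / sqrt (2 * real k)"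
    and y: "y \<in> {-1, 1}" and xn: "vnorm d x \<le> 1"
    and nz: "\<not> (y * net \<alpha> d k v W x \<ge> 1)"
  shows "GG d k (sgd_step \<alpha> d k v \<eta> W (x, y)) \<le> GG d k W + 2 * \<eta> + \<eta>\<^sup>2"
proof -
  let ?c = "\<lambda>j. sg k j * \<eta> * v * pp \<alpha> d (W j) x * y"
  have vpos: "v > 0" using v k by simp
  have y2: "y * y = 1" using y by auto
  have xx: "ip d x x \<le> 1" "0 \<le> ip d x x"
    using xn ip_nonneg[of d x] unfolding vnorm_def by (auto simp: real_sqrt_le_1_iff)
  have "GG d k (sgd_step \<alpha> d k v \<eta> W (x, y)) =
     (\<Sum>j<2*k. ip d (W j) (W j) + 2 * ?c j * ip d (W j) x + (?c j)\<^sup>2 * ip d x x)"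
    unfolding GG_def by (rule sum.cong) (simp_all add: step_nz[OF nz] ip_sq)
  also have "\<dots> = GG d k W + 2 * (\<Sum>j<2*k. ?c j * ip d (W j) x) + (\<Sum>j<2*k. (?c j)\<^sup>2 * ip d x x)"
    unfolding GG_def by (simp add: sum.distrib sum_distrib_left mult.assoc)
  also have "(\<Sum>j<2*k. ?c j * ip d (W j) x) = \<eta> * y * net \<alpha> d k v W x"
    unfolding net_alt sum_distrib_left
    by (intro sum.cong refl) (simp add: leaky_pp[symmetric] a(2)[THEN less_imp_le] algebra_simps)
  also have "(\<Sum>j<2*k. (?c j)\<^sup>2 * ip d x x) \<le> (\<Sum>j<2*k. \<eta>\<^sup>2 * v\<^sup>2)"
  proof (rule sum_mono)
    fix j
    have "(?c j)\<^sup>2 = \<eta>\<^sup>2 * v\<^sup>2 * (pp \<alpha> d (W j) x)\<^sup>2 * (sg k j * sg k j) * (y * y)"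
      by (simp add: power2_eq_square algebra_simps)
    also have "\<dots> = \<eta>\<^sup>2 * v\<^sup>2 * (pp \<alpha> d (W j) x)\<^sup>2" by (simp add: sg_sq y2)
    finally have c: "(?c j)\<^sup>2 = \<eta>\<^sup>2 * v\<^sup>2 * (pp \<alpha> d (W j) x)\<^sup>2" .
    have p2: "(pp \<alpha> d (W j) x)\<^sup>2 \<le> 1" using pp_ge[OF a, of d "W j" x] a
      by (simp add: abs_le_square_iff[symmetric] power2_eq_square) (smt (verit) mult_le_one)
    have "(pp \<alpha> d (W j) x)\<^sup>2 * ip d x x \<le> 1 * 1"
      by (rule mult_mono) (use p2 xx in auto)
    hence "\<eta>\<^sup>2 * v\<^sup>2 * ((pp \<alpha> d (W j) x)\<^sup>2 * ip d x x) \<le> \<eta>\<^sup>2 * v\<^sup>2 * 1"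
      by (intro mult_left_mono) auto
    thus "(?c j)\<^sup>2 * ip d x x \<le> \<eta>\<^sup>2 * v\<^sup>2" unfolding c by (simp add: mult.assoc)
  qed
  also have "(\<Sum>j<2*k. \<eta>\<^sup>2 * v\<^sup>2) = \<eta>\<^sup>2"
    using k by (simp add: v power_divide)
  finally have "GG d k (sgd_step \<alpha> d k v \<eta> W (x, y)) \<le> GG d k W + 2 * (\<eta> * (y * net \<alpha> d k v W x)) + \<eta>\<^sup>2"
    by (simp add: mult.assoc)
  moreover have "\<eta> * (y * net \<alpha> d k v W x) \<le> \<eta> * 1" using nz eta by (intro mult_left_mono) auto
  ultimately show ?thesis by linarith
qed

lemma card_Suc_pred: "card {s. s < Suc t \<and> P s} = card {s. s < t \<and> P s} + (if P t then 1 else 0)"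
proof -
  have e: "{s. s < Suc t \<and> P s} = {s. s < t \<and> P s} \<union> (if P t then {t} else {})"
    by (auto simp: less_Suc_eq)
  show ?thesis unfolding e by (auto simp: card_insert_if)
qed

lemma step_zero: "y * net \<alpha> d k v W x \<ge> 1 \<Longrightarrow> sgd_step \<alpha> d k v \<eta> W (x, y) = W"
  unfolding sgd_step_def by simp

lemma iter:
  assumes a: "0 < \<alpha>" "\<alpha> < 1" and eta: "\<eta> > 0" and k: "k \<ge> 1" and v: "v = 1 / sqrt (2 * real k)"
    and S: "\<forall>(x, y) \<in> set S. vnorm d x \<le> 1 \<and> y \<in> {-1, 1} \<and> y * ip d ws x \<ge> 1"
    and idx: "\<forall>t. idx t < length S"
  shows "FF d k (sgd \<alpha> d k v \<eta> S idx W0 t) ws \<ge> FF d k W0 ws + real (card {s. s < t \<and> nonzero_update \<alpha> d k v \<eta> S idx W0 s}) * (\<eta> * \<alpha> * sqrt (2 * real k))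
     \<and> GG d k (sgd \<alpha> d k v \<eta> S idx W0 t) \<le> GG d k W0 + real (card {s. s < t \<and> nonzero_update \<alpha> d k v \<eta> S idx W0 s}) * (2 * \<eta> + \<eta>\<^sup>2)"
proof (induction t)
  case 0
  then show ?case by simp
next
  case (Suc t)
  let ?W = "sgd \<alpha> d k v \<eta> S idx W0 t"
  obtain x y where xy: "S ! idx t = (x, y)" by (cases "S ! idx t")
  have "(x, y) \<in> set S" using xy idx by (metis nth_mem)
  with S have xn: "vnorm d x \<le> 1" and y: "y \<in> {-1, 1}" and m: "y * ip d ws x \<ge> 1" by auto
  have sgdS: "sgd \<alpha> d k v \<eta> S idx W0 (Suc t) = sgd_step \<alpha> d k v \<eta> ?W (x, y)" by (simp add: xy)
  show ?case
  proof (cases "nonzero_update \<alpha> d k v \<eta> S idx W0 t")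
    case True
    hence nz: "\<not> (y * net \<alpha> d k v ?W x \<ge> 1)" unfolding nonzero_update_def xy by simp
    note F = FF_step[OF a eta k v m nz] and G = GG_step[OF a eta k v y xn nz]
    show ?thesis unfolding sgdS card_Suc_pred using True Suc.IH F G by (simp add: algebra_simps)
  next
    case False
    hence nz: "y * net \<alpha> d k v ?W x \<ge> 1" unfolding nonzero_update_def xy by simp
    show ?thesis unfolding sgdS card_Suc_pred step_zero[OF nz] using False Suc.IH by simp
  qed
qed

lemma FF_bound:
  shows "\<bar>FF d k W ws\<bar> \<le> vnorm d ws * sqrt (2 * real k) * sqrt (GG d k W)"
proof -
  have "\<bar>FF d k W ws\<bar> \<le> (\<Sum>j<2*k. \<bar>sg k j * ip d (W j) ws\<bar>)"
    unfolding FF_def by (rule sum_abs)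
  also have "\<dots> \<le> (\<Sum>j<2*k. 1 * (vnorm d (W j) * vnorm d ws))"
    by (rule sum_mono) (simp add: sg_def cs)
  also have "\<dots> = vnorm d ws * (\<Sum>j<2*k. 1 * vnorm d (W j))"
    by (simp add: sum_distrib_left algebra_simps)
  also have "\<dots> \<le> vnorm d ws * (sqrt (2 * real k) * sqrt (GG d k W))"
  proof (rule mult_left_mono)
    have "(\<Sum>j<2*k. 1 * vnorm d (W j)) \<le> sqrt (\<Sum>j<2*k. 1\<^sup>2) * sqrt (\<Sum>j<2*k. (vnorm d (W j))\<^sup>2)"
      by (rule cs_sum)
    also have "(\<Sum>j<2*k. (vnorm d (W j))\<^sup>2) = GG d k W"
      unfolding GG_def vnorm_def by (simp add: ip_nonneg)
    finally show "(\<Sum>j<2*k. 1 * vnorm d (W j)) \<le> sqrt (2 * real k) * sqrt (GG d k W)" by simp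
    show "0 \<le> vnorm d ws" unfolding vnorm_def by (simp add: ip_nonneg)
  qed
  finally show ?thesis by (simp add: mult.assoc)
qed

lemma GG0: assumes k: "k \<ge> 1" and W: "\<forall>j < 2 * k. vnorm d (W j) \<le> 1 / sqrt (2 * real k)"
  shows "GG d k W \<le> 1"
proof -
  have "GG d k W = (\<Sum>j<2*k. (vnorm d (W j))\<^sup>2)"
    unfolding GG_def vnorm_def by (simp add: ip_nonneg)
  also have "\<dots> \<le> (\<Sum>j<2*k. (1 / sqrt (2 * real k))\<^sup>2)"
    proof (rule sum_mono)
    fix j assume "j \<in> {..<2*k}"
    hence "vnorm d (W j) \<le> 1 / sqrt (2 * real k)" using W by auto
    moreover have "0 \<le> vnorm d (W j)" unfolding vnorm_def by (simp add: ip_nonneg)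
    ultimately show "(vnorm d (W j))\<^sup>2 \<le> (1 / sqrt (2 * real k))\<^sup>2" by (rule power_mono)
  qed
  also have "\<dots> = 1" using k by (simp add: power_divide)
  finally show ?thesis .
qed

lemma alg:
  fixes a \<eta> \<alpha> M :: real
  assumes a1: "a \<ge> 1" and eta: "\<eta> > 0" and al: "0 < \<alpha>" and M: "M \<ge> 0"
    and h: "M * \<eta> * \<alpha> - a \<le> a * sqrt (1 + M * (2 * \<eta> + \<eta>\<^sup>2))"
  shows "M \<le> a\<^sup>2 / \<alpha>\<^sup>2 + (2 / \<alpha> + 2 / \<alpha>\<^sup>2) * a\<^sup>2 / min \<eta> (sqrt \<eta>)"
proof -
  define C where "C = 2 / \<alpha> + 2 / \<alpha>\<^sup>2"
  have Cpos: "C \<ge> 0" unfolding C_def using al by simp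
  have aa: "a \<le> a\<^sup>2" using a1 by (simp add: power2_eq_square)
  have ea: "\<eta> * \<alpha> > 0" using eta al by simp
  have key: "M \<le> a\<^sup>2 / \<alpha>\<^sup>2 + C * a\<^sup>2 / \<eta>"
  proof (cases "M * \<eta> * \<alpha> \<le> a")
    case True
    hence "M \<le> a / (\<eta> * \<alpha>)" using ea by (simp add: pos_le_divide_eq mult.assoc)
    also have "\<dots> \<le> a\<^sup>2 / (\<eta> * \<alpha>)" using aa ea by (simp add: divide_right_mono)
    also have "\<dots> \<le> C * a\<^sup>2 / \<eta>" unfolding C_def using al eta
      by (simp add: field_simps power2_eq_square)
    also have "\<dots> \<le> a\<^sup>2 / \<alpha>\<^sup>2 + C * a\<^sup>2 / \<eta>" by simp
    finally show ?thesis .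
  next
    case False
    define z where "z = M * \<eta> * \<alpha> - a"
    have zpos: "z > 0" using False z_def by simp
    have Mpos: "M > 0" using False a1 M by (cases "M = 0") auto
    have "z\<^sup>2 \<le> (a * sqrt (1 + M * (2 * \<eta> + \<eta>\<^sup>2)))\<^sup>2"
      using h zpos unfolding z_def[symmetric] by (intro power_mono) auto
    also have "\<dots> = a\<^sup>2 * (1 + M * (2 * \<eta> + \<eta>\<^sup>2))"
      using M eta by (simp add: power_mult_distrib)
    finally have "z\<^sup>2 \<le> a\<^sup>2 * (1 + M * (2 * \<eta> + \<eta>\<^sup>2))" .
    hence "M * (M * \<eta>\<^sup>2 * \<alpha>\<^sup>2) \<le> M * (2 * \<eta> * \<alpha> * a + a\<^sup>2 * (2 * \<eta> + \<eta>\<^sup>2))"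
      unfolding z_def by (simp add: power2_eq_square algebra_simps)
    hence "M * \<eta>\<^sup>2 * \<alpha>\<^sup>2 \<le> 2 * \<eta> * \<alpha> * a + a\<^sup>2 * (2 * \<eta> + \<eta>\<^sup>2)"
      using Mpos by simp
    hence "M \<le> (2 * \<eta> * \<alpha> * a + a\<^sup>2 * (2 * \<eta> + \<eta>\<^sup>2)) / (\<eta>\<^sup>2 * \<alpha>\<^sup>2)"
    proof -
      have p: "\<eta>\<^sup>2 * \<alpha>\<^sup>2 > 0" using eta al by simp
      assume hh: "M * \<eta>\<^sup>2 * \<alpha>\<^sup>2 \<le> 2 * \<eta> * \<alpha> * a + a\<^sup>2 * (2 * \<eta> + \<eta>\<^sup>2)"
      show ?thesis by (subst pos_le_divide_eq[OF p]) (use hh in \<open>simp add: mult.assoc\<close>)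
    qed
    also have "\<dots> = a\<^sup>2 / \<alpha>\<^sup>2 + (2 * a / \<alpha> + 2 * a\<^sup>2 / \<alpha>\<^sup>2) / \<eta>"
      using eta al by (simp add: field_simps power2_eq_square)
    also have "\<dots> \<le> a\<^sup>2 / \<alpha>\<^sup>2 + C * a\<^sup>2 / \<eta>"
    proof -
      have "2 * a / \<alpha> \<le> 2 * a\<^sup>2 / \<alpha>" using aa al by (simp add: divide_right_mono)
      hence "(2 * a / \<alpha> + 2 * a\<^sup>2 / \<alpha>\<^sup>2) \<le> C * a\<^sup>2" unfolding C_def
        by (simp add: algebra_simps)
      thus ?thesis using eta by (simp add: divide_right_mono)
    qed
    finally show ?thesis .
  qed
  have mn: "0 < min \<eta> (sqrt \<eta>)" "min \<eta> (sqrt \<eta>) \<le> \<eta>" using eta by auto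
  have "C * a\<^sup>2 / \<eta> \<le> C * a\<^sup>2 / min \<eta> (sqrt \<eta>)"
    using mn Cpos by (intro divide_left_mono) auto
  with key show ?thesis unfolding C_def by simp
qed

theorem corollary1:
  fixes \<alpha> :: real
  assumes "0 < \<alpha>" and "\<alpha> < 1"
  shows "\<exists>C>0. \<forall>(d::nat) (k::nat) (S :: ((nat \<Rightarrow> real) \<times> real) list) (wstar :: nat \<Rightarrow> real)
            (\<eta>::real) (W0 :: nat \<Rightarrow> nat \<Rightarrow> real) (idx :: nat \<Rightarrow> nat).
     k \<ge> 1 \<and> \<eta> > 0
     \<and> (\<forall>(x, y) \<in> set S. vnorm d x \<le> 1 \<and> y \<in> {-1, 1} \<and> y * ip d wstar x \<ge> 1)
     \<and> (\<forall>j < 2 * k. vnorm d (W0 j) \<le> 1 / sqrt (2 * real k))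
     \<and> (\<forall>t. idx t < length S)
     \<longrightarrow>
       (\<forall>t. real (card {s. s < t \<and> nonzero_update \<alpha> d k (1 / sqrt (2 * real k)) \<eta> S idx W0 s})
              \<le> (vnorm d wstar)\<^sup>2 / \<alpha>\<^sup>2 + C * (vnorm d wstar)\<^sup>2 / min \<eta> (sqrt \<eta>))
     \<and> ((\<forall>i < length S. \<forall>T. \<exists>t\<ge>T. idx t = i) \<longrightarrow>
          (\<exists>T. \<forall>t\<ge>T. sgd \<alpha> d k (1 / sqrt (2 * real k)) \<eta> S idx W0 t
                         = sgd \<alpha> d k (1 / sqrt (2 * real k)) \<eta> S idx W0 T
                \<and> loss \<alpha> d k (1 / sqrt (2 * real k)) S (sgd \<alpha> d k (1 / sqrt (2 * real k)) \<eta> S idx W0 T) = 0))"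
proof -
  define C where "C = 2 / \<alpha> + 2 / \<alpha>\<^sup>2"
  have Cpos: "C > 0" unfolding C_def using assms by (intro add_pos_pos divide_pos_pos) auto
  show ?thesis
  proof (rule exI[of _ C], rule conjI[OF Cpos], intro allI impI, rule conjI)
    fix d k :: nat and S :: "((nat \<Rightarrow> real) \<times> real) list" and ws :: "nat \<Rightarrow> real"
      and \<eta> :: real and W0 :: "nat \<Rightarrow> nat \<Rightarrow> real" and idx :: "nat \<Rightarrow> nat"
    assume H: "k \<ge> 1 \<and> \<eta> > 0
     \<and> (\<forall>(x, y) \<in> set S. vnorm d x \<le> 1 \<and> y \<in> {-1, 1} \<and> y * ip d ws x \<ge> 1)
     \<and> (\<forall>j < 2 * k. vnorm d (W0 j) \<le> 1 / sqrt (2 * real k))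
     \<and> (\<forall>t. idx t < length S)"
    define v where "v = 1 / sqrt (2 * real k)"
    have k: "k \<ge> 1" and eta: "\<eta> > 0" and S: "\<forall>(x, y) \<in> set S. vnorm d x \<le> 1 \<and> y \<in> {-1, 1} \<and> y * ip d ws x \<ge> 1"
      and W0: "\<forall>j < 2 * k. vnorm d (W0 j) \<le> 1 / sqrt (2 * real k)" and idx: "\<forall>t. idx t < length S"
      using H by auto
    note a = assms
    let ?a = "vnorm d ws"
    let ?nz = "nonzero_update \<alpha> d k v \<eta> S idx W0"
    let ?W = "sgd \<alpha> d k v \<eta> S idx W0"
    have a1: "?a \<ge> 1"
    proof -
      obtain x y where xy: "S ! idx 0 = (x, y)" by (cases "S ! idx 0")
      have "(x, y) \<in> set S" using xy idx by (metis nth_mem)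
      with S have xn: "vnorm d x \<le> 1" and y: "y \<in> {-1, 1}" and m: "y * ip d ws x \<ge> 1" by auto
      have "1 \<le> \<bar>y * ip d ws x\<bar>" using m by simp
      also have "\<dots> = \<bar>ip d ws x\<bar>" using y by (auto simp: abs_mult)
      also have "\<dots> \<le> ?a * vnorm d x" by (rule cs)
      also have "\<dots> \<le> ?a * 1" using xn by (intro mult_left_mono) (auto simp: vnorm_def ip_nonneg)
      finally show ?thesis by simp
    qed
    have s2k: "sqrt (2 * real k) > 0" using k by simp
    have G0: "GG d k W0 \<le> 1" by (rule GG0[OF k W0])
    have bound: "real (card {s. s < t \<and> ?nz s}) \<le> ?a\<^sup>2 / \<alpha>\<^sup>2 + C * ?a\<^sup>2 / min \<eta> (sqrt \<eta>)" for t
    proof -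
      define M where "M = real (card {s. s < t \<and> ?nz s})"
      have it: "FF d k (?W t) ws \<ge> FF d k W0 ws + M * (\<eta> * \<alpha> * sqrt (2 * real k))"
        "GG d k (?W t) \<le> GG d k W0 + M * (2 * \<eta> + \<eta>\<^sup>2)"
        using iter[OF a(1,2) eta k v_def S idx, of W0 t] unfolding M_def by auto
      have "FF d k (?W t) ws \<le> ?a * sqrt (2 * real k) * sqrt (GG d k (?W t))"
        using FF_bound[of d k "?W t" ws] by simp
      also have "\<dots> \<le> ?a * sqrt (2 * real k) * sqrt (1 + M * (2 * \<eta> + \<eta>\<^sup>2))"
        using it(2) G0 a1 by (intro mult_left_mono) auto
      finally have up: "FF d k (?W t) ws \<le> ?a * sqrt (2 * real k) * sqrt (1 + M * (2 * \<eta> + \<eta>\<^sup>2))" .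
      have "- FF d k W0 ws \<le> ?a * sqrt (2 * real k) * sqrt (GG d k W0)"
        using FF_bound[of d k W0 ws] by simp
      also have "\<dots> \<le> ?a * sqrt (2 * real k) * 1"
        using G0 a1 by (intro mult_left_mono) auto
      finally have lo: "- FF d k W0 ws \<le> ?a * sqrt (2 * real k)" by simp
      have "(M * \<eta> * \<alpha> - ?a) * sqrt (2 * real k) \<le> (?a * sqrt (1 + M * (2 * \<eta> + \<eta>\<^sup>2))) * sqrt (2 * real k)"
        using it(1) up lo by (simp add: algebra_simps)
      hence "M * \<eta> * \<alpha> - ?a \<le> ?a * sqrt (1 + M * (2 * \<eta> + \<eta>\<^sup>2))"
        using s2k by simp
      from alg[OF a1 eta a(1) _ this] show ?thesis unfolding M_def C_def by simp
    qed
    show "\<forall>t. real (card {s. s < t \<and> nonzero_update \<alpha> d k (1 / sqrt (2 * real k)) \<eta> S idx W0 s})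
              \<le> (vnorm d ws)\<^sup>2 / \<alpha>\<^sup>2 + C * (vnorm d ws)\<^sup>2 / min \<eta> (sqrt \<eta>)"
      using bound unfolding v_def by blast
    show "(\<forall>i < length S. \<forall>T. \<exists>t\<ge>T. idx t = i) \<longrightarrow>
          (\<exists>T. \<forall>t\<ge>T. sgd \<alpha> d k (1 / sqrt (2 * real k)) \<eta> S idx W0 t
                         = sgd \<alpha> d k (1 / sqrt (2 * real k)) \<eta> S idx W0 T
                \<and> loss \<alpha> d k (1 / sqrt (2 * real k)) S (sgd \<alpha> d k (1 / sqrt (2 * real k)) \<eta> S idx W0 T) = 0)"
      unfolding v_def[symmetric]
    proof
      assume inf: "\<forall>i < length S. \<forall>T. \<exists>t\<ge>T. idx t = i"
      define B where "B = ?a\<^sup>2 / \<alpha>\<^sup>2 + C * ?a\<^sup>2 / min \<eta> (sqrt \<eta>)"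
      have fin: "finite {s. ?nz s}"
      proof (rule ccontr)
        assume "infinite {s. ?nz s}"
        then obtain F where F: "finite F" "card F = Suc (nat \<lceil>B\<rceil>)" "F \<subseteq> {s. ?nz s}"
          using infinite_arbitrarily_large by blast
        have "F \<noteq> {}" using F by auto
        have sub: "F \<subseteq> {s. s < Suc (Max F) \<and> ?nz s}" using F by (auto simp: le_imp_less_Suc)
        have "card F \<le> card {s. s < Suc (Max F) \<and> ?nz s}"
          by (rule card_mono[OF _ sub]) simp
        hence "real (Suc (nat \<lceil>B\<rceil>)) \<le> B" using bound[of "Suc (Max F)"] F(2) unfolding B_def by linarith
        moreover have "B \<le> real (nat \<lceil>B\<rceil>)" by linarith
        ultimately show False by simp
      qed
      define T where "T = (if {s. ?nz s} = {} then 0 else Suc (Max {s. ?nz s}))"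
      have noT: "\<not> ?nz t" if "t \<ge> T" for t
      proof
        assume "?nz t"
        hence "t \<le> Max {s. ?nz s}" "{s. ?nz s} \<noteq> {}" using fin by auto
        hence "T = Suc (Max {s. ?nz s})" unfolding T_def by simp
        thus False using that \<open>t \<le> Max {s. ?nz s}\<close> by simp
      qed
      have const: "?W t = ?W T" if "t \<ge> T" for t
        using that
      proof (induction t rule: dec_induct)
        case base then show ?case by simp
      next
        case (step t)
        obtain x y where xy: "S ! idx t = (x, y)" by (cases "S ! idx t")
        have "y * net \<alpha> d k v (?W t) x \<ge> 1" using noT[OF step(1)] unfolding nonzero_update_def xy by simp
        hence "?W (Suc t) = ?W t" by (simp add: xy step_zero)
        with step show ?case by simp
      qed
      have good: "y * net \<alpha> d k v (?W T) x \<ge> 1" if xyS: "(x, y) \<in> set S" for x y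
      proof -
        obtain i where i: "i < length S" "S ! i = (x, y)" using xyS unfolding in_set_conv_nth by blast
        have "\<exists>t\<ge>T. idx t = i" using inf i(1) by simp
        then obtain t where t: "t \<ge> T" "idx t = i" by (elim exE conjE)
        have "\<not> ?nz t" by (rule noT[OF t(1)])
        hence "\<not> (snd (S ! idx t) * net \<alpha> d k v (?W t) (fst (S ! idx t)) < 1)"
          unfolding nonzero_update_def .
        hence "\<not> (y * net \<alpha> d k v (?W t) x < 1)" using t(2) i(2) by simp
        thus ?thesis unfolding const[OF t(1)] by simp
      qed
      have "(\<Sum>(x, y) \<leftarrow> S. max (1 - y * net \<alpha> d k v (?W T) x) 0) = (\<Sum>_ \<leftarrow> S. (0::real))"
      proof (rule arg_cong[where f = sum_list], rule map_cong[OF refl])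
        fix p assume p: "p \<in> set S"
        obtain x y where pxy: "p = (x, y)" by (cases p)
        have "y * net \<alpha> d k v (?W T) x \<ge> 1" using good p pxy by blast
        thus "(case p of (x, y) \<Rightarrow> max (1 - y * net \<alpha> d k v (?W T) x) 0) = 0" unfolding pxy by simp
      qed
      hence "loss \<alpha> d k v S (?W T) = 0" unfolding loss_def by simp
      thus "\<exists>T. \<forall>t\<ge>T. ?W t = ?W T \<and> loss \<alpha> d k v S (?W T) = 0" using const by blast
    qed
  qed
qed

end
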